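(* Consider the algorithm described in the context, suppose it does not terminate finitely, and suppose there is $\sigma_{\min}>0$ with $\sigma_{\min}(J_k)\ge\sigma_{\min}$ for all $k\in\mathbb{N}$ (smallest singular value). If $J_k^Tc_k\ne0$, then $\|c_k+J_ks_k\|_2\le\rho_k\|c_k\|_2$, where $$\rho_k:=\sqrt{\max\big\{1-\kappa_v\alpha_k\sigma_{\min}^2,\ 1-\sigma_{\min}^2/\kappa_{\nabla c}^2\big\}}\in[0,1).$$
   Context: Problem: $\min_{x\in\mathbb{R}^n} f(x)+r(x)$ subject to $c(x)=0$, where $f:\mathbb{R}^n\to\mathbb{R}$ and $c:\mathbb{R}^n\to\mathbb{R}^m$ ($m\le n$) are continuously differentiable and $r:\mathbb{R}^n\to\mathbb{R}_{\ge 0}$ is convex. Write $g(x)=\nabla f(x)$, $J(x)=\nabla c(x)^T$, and $f_k=f(x_k)$, $g_k=g(x_k)$, $c_k=c(x_k)$, $J_k=J(x_k)$, $r_k=r(x_k)$. All norms are Euclidean (spectral norm for matrices). Merit function: $\Phi_\tau(x)=\tau(f(x)+r(x))+\|c(x)\|_2$. Algorithm: inputs $x_0$, $\alpha_0>0$, $\tau_{-1}>0$; constants $\kappa_v>0$, $\sigma_c,\epsilon_\tau,\xi,\eta\in(0,1)$, $\sigma_u\in(0,1/2]$, $\bar\sigma_u:=\sigma_u+\tfrac12$. For $k=0,1,\dots$: 1. If $J_k^Tc_k\ne0$, compute $v_k$ with $v_k\in\mathrm{Range}(J_k^T)$, $\|v_k\|_2\le\kappa_v\alpha_k\|J_k^Tc_k\|_2$,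 $\|c_k+J_kv_k\|_2\le\|c_k+J_kv_k^c\|_2$, where $v_k^c=-\beta_k^cJ_k^Tc_k$ with $\beta_k^c$ minimizing $\tfrac12\|c_k-\beta J_kJ_k^Tc_k\|_2^2$ over $0\le\beta\le\kappa_v\alpha_k$. Otherwise set $v_k=0$, and if $c_k\ne0$ terminate. 2. Let $u_k$ be the unique minimizer of $g_k^Tu+\tfrac1{2\alpha_k}\|u\|_2^2+r(x_k+v_k+u)$ subject to $J_ku=0$; set $s_k=v_k+u_k$. If $s_k=0$, terminate. 3. Let $D_k:=g_k^Ts_k+\bar\sigma_u\|s_k\|_2^2/\alpha_k+r(x_k+s_k)-r_k$; $\tau_{k,\mathrm{trial}}=\infty$ if $D_k\le0$, else $\tau_{k,\mathrm{trial}}=(1-\sigma_c)(\|c_k\|_2-\|c_k+J_kv_k\|_2)/D_k$. Set $\tau_k=\tau_{k-1}$ if $\tau_{k-1}\le\tau_{k,\mathrm{trial}}$, else $\tau_k=\min\{(1-\epsilon_\tau)\tau_{k-1},\tau_{k,\mathrm{trial}}\}$. 4. With $\Delta q_k(s,\tau):=-\tau(g_k^Ts+\tfrac1{2\alpha_k}\|s\|_2^2+r(x_k+s)-r_k)+\|c_k\|_2-\|c_k+J_ks\|_2$: if $\Phi_{\tau_k}(x_k+s_k)\le\Phi_{\tau_k}(x_k)-\eta\Delta q_k(s_k,\tau_k)$ set $x_{k+1}=x_k+s_k$, $\alpha_{k+1}=\alpha_k$; else $x_{k+1}=x_k$, $\alpha_{k+1}=\xi\alpha_k$. Standing assumption: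 there is an open convex set $\mathcal X$ containing all iterates $x_k$ and trial points $x_k+s_k$ such that $f$ is bounded below on $\mathcal X$, $\nabla f$ is bounded and Lipschitz continuous on $\mathcal X$, $c$ is bounded on $\mathcal X$, $\|J(x)\|_2\le\kappa_{\nabla c}$ for $x\in\mathcal X$ (constant $\kappa_{\nabla c}>0$) and $J$ is Lipschitz on $\mathcal X$, and all subgradients of $r$ at points of $\mathcal X$ are uniformly bounded in norm. *)

theory Defs
  imports "HOL-Analysis.Analysis"
begin

text \<open>Points live in real^'n, constraint values in real^'m; the Jacobian J x is an
 m x n matrix (type real^'n^'m).  Spectral norm of a matrix A is onorm (\<lambda>h. A *v h).\<close>

text \<open>Smallest singular value of a (wide, m \<le> n) matrix A: square root of the smallest
 eigenvalue of A A^T.\<close>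
definition sigma_min_sv :: "real^'n^'m \<Rightarrow> real" where
  "sigma_min_sv A = sqrt (Inf {lam. \<exists>y. y \<noteq> 0 \<and> (A ** transpose A) *v y = lam *\<^sub>R y})"

definition problem_data ::
  "(real^'n \<Rightarrow> real) \<Rightarrow> (real^'n \<Rightarrow> real^'n) \<Rightarrow> (real^'n \<Rightarrow> real)
   \<Rightarrow> (real^'n \<Rightarrow> real^'m) \<Rightarrow> (real^'n \<Rightarrow> real^'n^'m) \<Rightarrow> bool" where
  "problem_data f g r c J \<longleftrightarrow>
     (\<forall>x. (f has_derivative (\<lambda>h. g x \<bullet> h)) (at x)) \<and> continuous_on UNIV g \<and>
     (\<forall>x. (c has_derivative (\<lambda>h. J x *v h)) (at x)) \<and> continuous_on UNIV J \<and>
     convex_on UNIV r \<and> (\<forall>x. 0 \<le> r x)"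

definition merit :: "(real^'n \<Rightarrow> real) \<Rightarrow> (real^'n \<Rightarrow> real) \<Rightarrow> (real^'n \<Rightarrow> real^'m)
   \<Rightarrow> real \<Rightarrow> real^'n \<Rightarrow> real" where
  "merit f r c tau x = tau * (f x + r x) + norm (c x)"

definition model_red :: "(real^'n \<Rightarrow> real^'n) \<Rightarrow> (real^'n \<Rightarrow> real) \<Rightarrow> (real^'n \<Rightarrow> real^'m)
   \<Rightarrow> (real^'n \<Rightarrow> real^'n^'m) \<Rightarrow> real^'n \<Rightarrow> real \<Rightarrow> real^'n \<Rightarrow> real \<Rightarrow> real" where
  "model_red g r c J xk ak s tau =
     - tau * (g xk \<bullet> s + norm s ^ 2 / (2 * ak) + r (xk + s) - r xk)
     + norm (c xk) - norm (c xk + J xk *v s)"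

text \<open>The sequences x, alpha, tau, v, u (with s_k = v_k + u_k) are generated by the algorithm
 with inputs x0, alpha0, tau_{-1} = taum1 and constants kv, sc, et, xi, eta, su.\<close>
definition algo_run ::
  "(real^'n \<Rightarrow> real) \<Rightarrow> (real^'n \<Rightarrow> real^'n) \<Rightarrow> (real^'n \<Rightarrow> real)
   \<Rightarrow> (real^'n \<Rightarrow> real^'m) \<Rightarrow> (real^'n \<Rightarrow> real^'n^'m)
   \<Rightarrow> real \<Rightarrow> real \<Rightarrow> real \<Rightarrow> real \<Rightarrow> real \<Rightarrow> real
   \<Rightarrow> real^'n \<Rightarrow> real \<Rightarrow> real
   \<Rightarrow> (nat \<Rightarrow> real^'n) \<Rightarrow> (nat \<Rightarrow> real) \<Rightarrow> (nat \<Rightarrow> real)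
   \<Rightarrow> (nat \<Rightarrow> real^'n) \<Rightarrow> (nat \<Rightarrow> real^'n) \<Rightarrow> bool" where
  "algo_run f g r c J kv sc et xi eta su x0 alpha0 taum1 x alpha tau v u \<longleftrightarrow>
     x 0 = x0 \<and> alpha 0 = alpha0 \<and>
     (\<forall>k. let xk = x k; gk = g xk; ck = c xk; Jk = J xk; ak = alpha k;
              tprev = (if k = 0 then taum1 else tau (k - 1)); sk = v k + u k
          in
          \<comment> \<open>Step 1\<close>
          (if transpose Jk *v ck \<noteq> 0 then
             v k \<in> range (\<lambda>y. transpose Jk *v y) \<and>
             norm (v k) \<le> kv * ak * norm (transpose Jk *v ck) \<and>
             (\<exists>\<beta>. 0 \<le> \<beta> \<and> \<beta> \<le> kv * ak \<and>
                 (\<forall>\<beta>'. 0 \<le> \<beta>' \<and> \<beta>' \<le> kv * ak \<longrightarrow>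
                    norm (ck - \<beta> *\<^sub>R (Jk *v (transpose Jk *v ck))) ^ 2 / 2
                    \<le> norm (ck - \<beta>' *\<^sub>R (Jk *v (transpose Jk *v ck))) ^ 2 / 2) \<and>
                 norm (ck + Jk *v v k) \<le> norm (ck + Jk *v (- (\<beta> *\<^sub>R (transpose Jk *v ck)))))
           else v k = 0) \<and>
          \<comment> \<open>Step 2\<close>
          Jk *v u k = 0 \<and>
          (\<forall>u'. Jk *v u' = 0 \<longrightarrow>
              gk \<bullet> u k + norm (u k) ^ 2 / (2 * ak) + r (xk + v k + u k)
              \<le> gk \<bullet> u' + norm u' ^ 2 / (2 * ak) + r (xk + v k + u')) \<and>
          \<comment> \<open>Step 3\<close>
          (let D = gk \<bullet> sk + (su + 1/2) * norm sk ^ 2 / ak + r (xk + sk) - r xk;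
               ttrial = (1 - sc) * (norm ck - norm (ck + Jk *v v k)) / D
           in tau k = (if D \<le> 0 \<or> tprev \<le> ttrial then tprev
                       else min ((1 - et) * tprev) ttrial)) \<and>
          \<comment> \<open>Step 4\<close>
          (if merit f r c (tau k) (xk + sk)
                \<le> merit f r c (tau k) xk - eta * model_red g r c J xk ak sk (tau k)
           then x (Suc k) = xk + sk \<and> alpha (Suc k) = ak
           else x (Suc k) = xk \<and> alpha (Suc k) = xi * ak))"

definition no_termination ::
  "(real^'n \<Rightarrow> real^'m) \<Rightarrow> (real^'n \<Rightarrow> real^'n^'m)
   \<Rightarrow> (nat \<Rightarrow> real^'n) \<Rightarrow> (nat \<Rightarrow> real^'n) \<Rightarrow> (nat \<Rightarrow> real^'n) \<Rightarrow> bool" where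
  "no_termination c J x v u \<longleftrightarrow>
     (\<forall>k. (transpose (J (x k)) *v c (x k) = 0 \<longrightarrow> c (x k) = 0) \<and> v k + u k \<noteq> 0)"

definition standing_assumption ::
  "(real^'n \<Rightarrow> real) \<Rightarrow> (real^'n \<Rightarrow> real^'n) \<Rightarrow> (real^'n \<Rightarrow> real)
   \<Rightarrow> (real^'n \<Rightarrow> real^'m) \<Rightarrow> (real^'n \<Rightarrow> real^'n^'m) \<Rightarrow> real
   \<Rightarrow> (nat \<Rightarrow> real^'n) \<Rightarrow> (nat \<Rightarrow> real^'n) \<Rightarrow> (nat \<Rightarrow> real^'n) \<Rightarrow> bool" where
  "standing_assumption f g r c J knc x v u \<longleftrightarrow>
     (\<exists>X. open X \<and> convex X \<and> (\<forall>k. x k \<in> X \<and> x k + (v k + u k) \<in> X) \<and>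
        bdd_below (f ` X) \<and> bounded (g ` X) \<and>
        (\<exists>L. \<forall>y\<in>X. \<forall>z\<in>X. norm (g y - g z) \<le> L * dist y z) \<and>
        bounded (c ` X) \<and>
        (\<forall>y\<in>X. onorm (\<lambda>h. J y *v h) \<le> knc) \<and>
        (\<exists>L. \<forall>y\<in>X. \<forall>z\<in>X. onorm (\<lambda>h. (J y - J z) *v h) \<le> L * dist y z) \<and>
        (\<exists>B. \<forall>y\<in>X. \<forall>w. (\<forall>z. r z \<ge> r y + w \<bullet> (z - y)) \<longrightarrow> norm w \<le> B))"

end

theory Submission
  imports Defs
begin

lemma adj: "inner (A *v x) y = inner x (transpose A *v (y::real^'m))" for A :: "real^'n^'m"
  using dot_lmul_matrix[of x "transpose A" y] by simp

lemma eig_min: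
  fixes A :: "real^'n^'m"
  defines "S \<equiv> {lam. \<exists>y. y \<noteq> 0 \<and> (A ** transpose A) *v y = lam *\<^sub>R y}"
  shows "\<forall>y. Inf S * norm y ^ 2 \<le> norm (transpose A *v y) ^ 2"
proof -
  let ?Q = "\<lambda>y. norm (transpose A *v y) ^ 2"
  have cont: "continuous_on (sphere 0 1) ?Q"
    by (intro continuous_intros linear_continuous_on bounded_linear_intros) 
  obtain y0 where y0: "y0 \<in> sphere (0::real^'m) 1" "\<forall>y\<in>sphere 0 1. ?Q y0 \<le> ?Q y"
    using continuous_attains_inf[OF compact_sphere _ cont] by (metis norm_axis_1 sphere_eq_empty ex_in_conv mem_sphere_0 zero_less_one not_less)
  define lam where "lam = ?Q y0"
  have hom: "lam * norm y ^ 2 \<le> ?Q y" for y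
  proof (cases "y = 0")
    case False
    let ?z = "(1 / norm y) *\<^sub>R y"
    have "?z \<in> sphere 0 1" using False by simp
    hence "lam \<le> ?Q ?z" using y0 lam_def by auto
    also have "?Q ?z = ?Q y / norm y ^ 2"
      by (simp add: matrix_vector_mult_scaleR power_divide)
    finally show ?thesis using False by (simp add: field_simps)
  qed simp
  have eig: "(A ** transpose A) *v y0 = lam *\<^sub>R y0"
  proof (rule ccontr)
    define e where "e = (A ** transpose A) *v y0 - lam *\<^sub>R y0"
    assume "(A ** transpose A) *v y0 \<noteq> lam *\<^sub>R y0"
    hence enz: "e \<noteq> 0" using e_def by simp
    define K where "K = \<bar>?Q e - lam * norm e ^ 2\<bar>"
    define t where "t = norm e ^ 2 / (K + 1)"
    have tpos: "t > 0" using enz by (simp add: t_def K_def)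
    have key: "?Q (y0 - t *\<^sub>R e) - lam * norm (y0 - t *\<^sub>R e) ^ 2
       = (?Q y0 - lam * norm y0 ^ 2) - 2 * t * norm e ^ 2 + t^2 * (?Q e - lam * norm e ^ 2)"
    proof -
      have i0: "inner (transpose A *v y0) (transpose A *v e) = inner ((A ** transpose A) *v y0) e"
        by (metis adj inner_commute matrix_vector_mul_assoc)
      have i2: "inner e e = inner ((A ** transpose A) *v y0) e - lam * inner y0 e"
        by (simp add: e_def inner_diff_left)
      have gen: "norm (a - t *\<^sub>R b) ^ 2 - lam * norm (y - t *\<^sub>R d) ^ 2 =
         (norm a ^ 2 - lam * norm y ^ 2) - 2 * t * (inner a b - lam * inner y d) + t^2 * (norm b ^ 2 - lam * norm d ^ 2)"
        for a b :: "real^'n" and y d :: "real^'m"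
        unfolding power2_norm_eq_inner
        by (simp add: inner_diff_left inner_diff_right inner_commute algebra_simps power2_eq_square)
      have "transpose A *v (y0 - t *\<^sub>R e) = transpose A *v y0 - t *\<^sub>R (transpose A *v e)"
        by (simp only: matrix_vector_mult_diff_distrib matrix_vector_mult_scaleR)
      then show ?thesis
        using gen[of "transpose A *v y0" "transpose A *v e" y0 e] i0 i2
        by (simp only: power2_norm_eq_inner[of e, symmetric])
    qed
    have z: "?Q y0 - lam * norm y0 ^ 2 = 0" using y0 lam_def by simp
    have "t * (?Q e - lam * norm e ^ 2) \<le> t * K" using tpos K_def by (intro mult_left_mono) auto
    also have "t * K < norm e ^ 2" using enz K_def unfolding t_def by (simp add: field_simps)
    finally have "t^2 * (?Q e - lam * norm e ^ 2) < t * norm e ^ 2"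
      using tpos by (simp add: power2_eq_square mult.assoc)
    hence "?Q (y0 - t *\<^sub>R e) - lam * norm (y0 - t *\<^sub>R e) ^ 2 < 0" 
    proof -
      have "t * norm e ^ 2 > 0" using tpos enz by simp
      then show ?thesis using key z \<open>t^2 * (?Q e - lam * norm e ^ 2) < t * norm e ^ 2\<close> by linarith
    qed
    thus False using hom[of "y0 - t *\<^sub>R e"] by simp
  qed
  have inS: "lam \<in> S" unfolding S_def using eig y0 by (auto intro!: exI[of _ y0])
  have lowS: "lam \<le> mu" if "mu \<in> S" for mu
  proof -
    from that obtain y where y: "y \<noteq> 0" "(A ** transpose A) *v y = mu *\<^sub>R y" unfolding S_def by auto
    have "?Q y = inner y ((A ** transpose A) *v y)"
      by (simp add: power2_norm_eq_inner matrix_vector_mul_assoc[symmetric] dot_lmul_matrix)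
    also have "\<dots> = mu * norm y ^ 2" using y by (simp add: power2_norm_eq_inner)
    finally show ?thesis using hom[of y] y by simp
  qed
  have "Inf S = lam"
    by (rule cInf_eq_minimum[OF inS lowS])
  thus ?thesis using hom by simp
qed

lemma alpha_pos:
  assumes "algo_run f g r c J kv sc et xi eta su x0 alpha0 taum1 x alpha tau v u"
    and "alpha0 > 0" "0 < xi"
  shows "alpha k > 0"
proof (induction k)
  case 0 then show ?case using assms unfolding algo_run_def by simp
next
  case (Suc k)
  from assms(1) have "alpha (Suc k) = alpha k \<or> alpha (Suc k) = xi * alpha k"
    unfolding algo_run_def Let_def by (metis (no_types, lifting))
  then show ?case using Suc assms(3) by auto
qed

theorem lemma3p12:
  fixes f :: "real^'n \<Rightarrow> real" and g :: "real^'n \<Rightarrow> real^'n" and r :: "real^'n \<Rightarrow> real"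
    and c :: "real^'n \<Rightarrow> real^'m" and J :: "real^'n \<Rightarrow> real^'n^'m"
    and kv sc et xi eta su alpha0 taum1 knc smin :: real and x0 :: "real^'n"
    and x v u :: "nat \<Rightarrow> real^'n" and alpha tau :: "nat \<Rightarrow> real" and k :: nat
  assumes "CARD('m) \<le> CARD('n)"
    and "problem_data f g r c J"
    and "kv > 0" and "0 < sc" "sc < 1" and "0 < et" "et < 1" and "0 < xi" "xi < 1"
    and "0 < eta" "eta < 1" and "0 < su" "su \<le> 1/2"
    and "alpha0 > 0" and "taum1 > 0" and "knc > 0"
    and "standing_assumption f g r c J knc x v u"
    and "algo_run f g r c J kv sc et xi eta su x0 alpha0 taum1 x alpha tau v u"
    and "no_termination c J x v u"
    and "smin > 0" and "\<forall>j. sigma_min_sv (J (x j)) \<ge> smin"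
    and "transpose (J (x k)) *v c (x k) \<noteq> 0"
  shows "let rho = sqrt (max (1 - kv * alpha k * smin ^ 2) (1 - smin ^ 2 / knc ^ 2))
         in norm (c (x k) + J (x k) *v (v k + u k)) \<le> rho * norm (c (x k))
            \<and> 0 \<le> rho \<and> rho < 1"
proof -
  define c0 where "c0 = c (x k)"
  define A where "A = J (x k)"
  define a where "a = alpha k"
  define w where "w = transpose A *v c0"
  define q where "q = A *v w"
  have apos: "a > 0" unfolding a_def using alpha_pos assms(18,14,8) by blast
  have wnz: "w \<noteq> 0" using assms(22) unfolding w_def A_def c0_def .
  have step: "(if transpose A *v c0 \<noteq> 0 then
             v k \<in> range (\<lambda>y. transpose A *v y) \<and>
             norm (v k) \<le> kv * a * norm (transpose A *v c0) \<and>
             (\<exists>\<beta>. 0 \<le> \<beta> \<and> \<beta> \<le> kv * a \<and>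
                 (\<forall>\<beta>'. 0 \<le> \<beta>' \<and> \<beta>' \<le> kv * a \<longrightarrow>
                    norm (c0 - \<beta> *\<^sub>R (A *v (transpose A *v c0))) ^ 2 / 2
                    \<le> norm (c0 - \<beta>' *\<^sub>R (A *v (transpose A *v c0))) ^ 2 / 2) \<and>
                 norm (c0 + A *v v k) \<le> norm (c0 + A *v (- (\<beta> *\<^sub>R (transpose A *v c0)))))
           else v k = 0) \<and> A *v u k = 0"
    using assms(18) unfolding algo_run_def Let_def A_def c0_def a_def by blast
  then obtain \<beta> where b0: "0 \<le> \<beta>" "\<beta> \<le> kv * a"
    and bmin: "\<And>\<beta>'. 0 \<le> \<beta>' \<Longrightarrow> \<beta>' \<le> kv * a \<Longrightarrow>
                    norm (c0 - \<beta> *\<^sub>R q) ^ 2 / 2 \<le> norm (c0 - \<beta>' *\<^sub>R q) ^ 2 / 2"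
    and vb: "norm (c0 + A *v v k) \<le> norm (c0 + A *v (- (\<beta> *\<^sub>R w)))"
    and Au: "A *v u k = 0"
    using wnz unfolding q_def w_def by auto
  obtain X where X: "x k \<in> X" "\<forall>y\<in>X. onorm (\<lambda>h. J y *v h) \<le> knc"
    using assms(17) unfolding standing_assumption_def by blast
  have Anorm: "norm (A *v h) \<le> knc * norm h" for h
  proof -
    have "norm (A *v h) \<le> onorm (\<lambda>h. A *v h) * norm h"
      using onorm[OF matrix_vector_mul_bounded_linear] by blast
    also have "\<dots> \<le> knc * norm h" using X unfolding A_def by (intro mult_right_mono) auto
    finally show ?thesis .
  qed
  define S where "S = {lam. \<exists>y. y \<noteq> 0 \<and> (A ** transpose A) *v y = lam *\<^sub>R y}"
  have "smin \<le> sqrt (Inf S)" using assms(21) unfolding sigma_min_sv_def S_def A_def by blast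
  hence sS: "smin ^ 2 \<le> Inf S" using assms(20)
    by (metis less_le_trans not_le power_mono real_sqrt_le_0_iff real_sqrt_pow2 order.strict_implies_order)
  have wlow: "smin ^ 2 * norm c0 ^ 2 \<le> norm w ^ 2"
  proof -
    have "Inf S * norm c0 ^ 2 \<le> norm w ^ 2" using eig_min[of A] unfolding S_def w_def by blast
    moreover have "smin ^ 2 * norm c0 ^ 2 \<le> Inf S * norm c0 ^ 2" using sS by (intro mult_right_mono) auto
    ultimately show ?thesis by linarith
  qed
  have qup: "norm q ^ 2 \<le> knc ^ 2 * norm w ^ 2"
  proof -
    have "norm q \<le> knc * norm w" using Anorm unfolding q_def .
    hence "norm q ^ 2 \<le> (knc * norm w) ^ 2" by (intro power_mono) auto
    thus ?thesis by (simp add: power_mult_distrib)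
  qed
  have cq: "inner c0 q = norm w ^ 2"
    unfolding q_def w_def by (simp add: adj power2_norm_eq_inner inner_commute[of c0])
  have phi: "norm (c0 - t *\<^sub>R q) ^ 2 = norm c0 ^ 2 - 2 * t * norm w ^ 2 + t ^ 2 * norm q ^ 2" for t
    using cq unfolding power2_norm_eq_inner
    by (simp add: inner_diff_left inner_diff_right inner_commute algebra_simps power2_eq_square)
  define b' where "b' = min (kv * a) (1 / knc ^ 2)"
  have b'pos: "b' > 0" unfolding b'_def using apos assms(3,16) by simp
  have b'le: "b' \<le> kv * a" "b' \<le> 1 / knc ^ 2" unfolding b'_def by auto
  have "b' * norm q ^ 2 \<le> (1 / knc ^ 2) * (knc ^ 2 * norm w ^ 2)"
    using b'le(2) qup b'pos by (intro mult_mono) auto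
  hence bq: "b' * norm q ^ 2 \<le> norm w ^ 2" using assms(16) by simp
  define M where "M = max (1 - kv * alpha k * smin ^ 2) (1 - smin ^ 2 / knc ^ 2)"
  have M_eq: "M = 1 - b' * smin ^ 2"
  proof -
    have gen: "max (1 - p * s) (1 - q * s) = 1 - min p q * s" if "s > 0" for p q s :: real
    proof (cases "p \<le> q")
      case True
      then have "p * s \<le> q * s" using that by (intro mult_right_mono) auto
      then show ?thesis using True by (simp add: max_def min_def)
    next
      case False
      then have "q * s \<le> p * s" using that by (intro mult_right_mono) auto
      then show ?thesis using False by (simp add: max_def min_def)
    qed
    have "smin ^ 2 / knc ^ 2 = (1 / knc ^ 2) * smin ^ 2" by simp
    then show ?thesis unfolding M_def b'_def a_def using gen[of "smin ^ 2" "kv * alpha k" "1 / knc ^ 2"] assms(20)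
      by simp
  qed
  have "norm (c0 - b' *\<^sub>R q) ^ 2 = norm c0 ^ 2 - b' * norm w ^ 2 - b' * (norm w ^ 2 - b' * norm q ^ 2)"
    unfolding phi by (simp add: power2_eq_square algebra_simps)
  also have "\<dots> \<le> norm c0 ^ 2 - b' * norm w ^ 2"
    using b'pos bq by (simp add: mult_nonneg_nonneg)
  also have "\<dots> \<le> norm c0 ^ 2 - b' * (smin ^ 2 * norm c0 ^ 2)"
    using wlow b'pos by (simp add: mult_left_mono)
  also have "\<dots> = M * norm c0 ^ 2" unfolding M_eq by (simp add: algebra_simps)
  finally have phib': "norm (c0 - b' *\<^sub>R q) ^ 2 \<le> M * norm c0 ^ 2" .
  have sk: "c0 + A *v (v k + u k) = c0 + A *v v k" using Au by (simp add: matrix_vector_right_distrib)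
  have "A *v (- (\<beta> *\<^sub>R w)) = - (\<beta> *\<^sub>R q)" unfolding q_def
    by (metis matrix_vector_mult_scaleR scaleR_minus_left matrix_vector_mult_diff_distrib diff_0 matrix_vector_mult_0_right)
  hence vb2: "norm (c0 + A *v v k) \<le> norm (c0 - \<beta> *\<^sub>R q)" using vb by simp
  have "norm (c0 + A *v v k) ^ 2 \<le> norm (c0 - \<beta> *\<^sub>R q) ^ 2" using vb2 by (intro power_mono) auto
  also have "\<dots> \<le> norm (c0 - b' *\<^sub>R q) ^ 2" using bmin[of b'] b'pos b'le by simp
  also have "\<dots> \<le> M * norm c0 ^ 2" by (rule phib')
  finally have main: "norm (c0 + A *v v k) ^ 2 \<le> M * norm c0 ^ 2" .
  have c0nz: "c0 \<noteq> 0" using wnz unfolding w_def by auto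
  have M0: "M \<ge> 0"
  proof -
    have "0 \<le> M * norm c0 ^ 2" using main by (smt (verit) zero_le_power2)
    thus ?thesis using c0nz by (simp add: zero_le_mult_iff)
  qed
  have M1: "M < 1" unfolding M_eq using b'pos assms(20) by simp
  have "norm (c0 + A *v v k) \<le> sqrt M * norm c0"
  proof -
    have "norm (c0 + A *v v k) = sqrt (norm (c0 + A *v v k) ^ 2)" by simp
    also have "\<dots> \<le> sqrt (M * norm c0 ^ 2)" using main by (rule real_sqrt_le_mono)
    also have "\<dots> = sqrt M * norm c0" by (simp add: real_sqrt_mult)
    finally show ?thesis .
  qed
  moreover have "sqrt M < 1" using M0 M1 by simp
  ultimately show ?thesis unfolding Let_def M_def[symmetric] using sk M0
    unfolding c0_def A_def by simp
qed

end
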